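(* Let $m,a,b,t\in\mathbb{N}$ with $m\geq 3$, $a\geq 1$, $t\in\{2,\ldots,m-1\}$ and $(t-1)(am+1)<bm+t<t(am+1)$, and let $S=\langle m,\ am+1,\ bm+t\rangle$ (a MANS-semigroup with embedding dimension $3$). Then the type $\mathrm{t}(S)$ equals $1$ if and only if $t$ divides $m$.
   Context: $\mathbb{N}=\{0,1,2,\ldots\}$. $\langle A\rangle$ is the submonoid of $(\mathbb{N},+)$ generated by $A$; a numerical semigroup is a submonoid of $\mathbb{N}$ with finite complement. A pseudo-Frobenius number of $S$ is an $x\in\mathbb{Z}\setminus S$ with $x+s\in S$ for all $s\in S\setminus\{0\}$; $\mathrm{PF}(S)$ is the set of them and $\mathrm{t}(S)=|\mathrm{PF}(S)|$ is the type of $S$. A MANS-semigroup is a numerical semigroup with $w(1)<\cdots<w(\mathrm{m}(S)-1)$, where $\mathrm{m}(S)$ is the least element of $S\setminus\{0\}$ and $w(i)$ the least element of $S$ congruent to $i$ modulo $\mathrm{m}(S)$. *)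

theory Defs
  imports Main
begin

inductive_set gen_monoid :: "nat set \<Rightarrow> nat set" for A :: "nat set" where
  zero: "0 \<in> gen_monoid A"
| add: "x \<in> gen_monoid A \<Longrightarrow> a \<in> A \<Longrightarrow> x + a \<in> gen_monoid A"

definition pseudo_frobenius :: "nat set \<Rightarrow> int set" where
  "pseudo_frobenius S = {x :: int. x \<notin> int ` S \<and> (\<forall>s\<in>S. s \<noteq> 0 \<longrightarrow> x + int s \<in> int ` S)}"

definition semigroup_type :: "nat set \<Rightarrow> nat" where
  "semigroup_type S = card (pseudo_frobenius S)"

end

theory Submission imports Defs begin

lemma gm_mult: "x \<in> gen_monoid A \<Longrightarrow> c \<in> A \<Longrightarrow> x + n*c \<in> gen_monoid A"
proof (induction n)
  case 0 then show ?case by simp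
next
  case (Suc n)
  then have "x + n*c + c \<in> gen_monoid A" by (simp add: gen_monoid.add)
  then show ?case by (metis add.assoc add.commute mult_Suc)
qed

locale mans3 =
  fixes m a b t :: nat
  assumes m3: "m \<ge> 3" and a1: "a \<ge> 1" and t2: "2 \<le> t" and tm: "t \<le> m - 1"
    and lo: "(t - 1) * (a * m + 1) < b * m + t" and hi: "b * m + t < t * (a * m + 1)"
begin

definition g :: "nat \<Rightarrow> nat" where "g i = (i mod t)*a + (i div t)*b"

lemma b_lt: "b < t*a"
proof -
  have "b*m < (t*a)*m" using hi by (simp add: algebra_simps)
  then show ?thesis by simp
qed

lemma b_ge: "(t-1)*a \<le> b"
proof -
  have "(t - 1) * (a * m + 1) = (t-1)*a*m + (t-1)" by (simp add: algebra_simps)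
  with lo t2 have "(t-1)*a*m < b*m + 1" by linarith
  then have "(t-1)*a*m \<le> b*m" by linarith
  then show ?thesis using m3 by simp
qed

lemma g_Suc: "g i \<le> g (Suc i)"
proof (cases "Suc (i mod t) = t")
  case True
  then have "Suc i mod t = 0" "Suc i div t = Suc (i div t)"
    by (simp_all add: mod_Suc div_Suc)
  moreover have "i mod t = t - 1" using True by simp
  ultimately show ?thesis using b_ge unfolding g_def by (simp add: algebra_simps)
next
  case False
  then have "Suc i mod t = Suc (i mod t)" "Suc i div t = i div t"
    by (simp_all add: mod_Suc div_Suc)
  then show ?thesis unfolding g_def by simp
qed

lemma g_mono: "i \<le> j \<Longrightarrow> g i \<le> g j"
  using g_Suc by (rule lift_Suc_mono_le)

lemma g_le: "g (y + z*t) \<le> y*a + z*b"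
proof -
  have t0: "t > 0" using t2 by simp
  have "(y + z*t) mod t = y mod t" by simp
  moreover have "(y + z*t) div t = y div t + z" using t0 by simp
  moreover have "(y div t)*b \<le> (y div t)*(t*a)" using b_lt by simp
  moreover have "y*a = (y mod t)*a + (y div t)*(t*a)"
    by (metis mod_div_mult_eq add.commute mult.assoc mult.commute distrib_right)
  ultimately show ?thesis unfolding g_def by (simp add: algebra_simps)
qed

lemma memc: "g i \<le> c \<Longrightarrow> c*m + i \<in> gen_monoid {m, a*m+1, b*m+t}"
proof -
  assume h: "g i \<le> c"
  have t0: "t > 0" using t2 by simp
  let ?y = "i mod t" and ?z = "i div t"
  have "i = ?y + ?z*t" by simp
  have e1: "c*m = g i * m + (c - g i)*m" using h
    by (metis add_mult_distrib le_add_diff_inverse)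
  have e2: "g i * m + i = ?y*(a*m+1) + ?z*(b*m+t)"
  proof -
    have "?y*(a*m+1) + ?z*(b*m+t) = (?y*a + ?z*b)*m + (?y + ?z*t)" by (simp add: algebra_simps)
    also have "?y + ?z*t = i" by simp
    finally show ?thesis unfolding g_def by simp
  qed
  have e: "c*m + i = ?y*(a*m+1) + ?z*(b*m+t) + (c - g i)*m"
    using e1 e2 by simp
  have "0 + ?y*(a*m+1) \<in> gen_monoid {m, a*m+1, b*m+t}"
    by (rule gm_mult) (auto intro: gen_monoid.zero)
  then have "0 + ?y*(a*m+1) + ?z*(b*m+t) \<in> gen_monoid {m, a*m+1, b*m+t}"
    by (rule gm_mult) auto
  then have "0 + ?y*(a*m+1) + ?z*(b*m+t) + (c - g i)*m \<in> gen_monoid {m, a*m+1, b*m+t}"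
    by (rule gm_mult) auto
  then show ?thesis using e by simp
qed

lemma gm_rep: "x \<in> gen_monoid {m, a*m+1, b*m+t} \<Longrightarrow> \<exists>k y z. x = k*m + y*(a*m+1) + z*(b*m+t)"
proof (induction rule: gen_monoid.induct)
  case zero
  then show ?case by (rule exI[of _ 0]) simp
next
  case (add x c)
  then obtain k y z where x: "x = k*m + y*(a*m+1) + z*(b*m+t)" by blast
  from add.hyps(2) consider "c = m" | "c = a*m+1" | "c = b*m+t" by blast
  then show ?case
  proof cases
    case 1 then show ?thesis using x by (intro exI[of _ "Suc k"] exI[of _ y] exI[of _ z]) simp
  next
    case 2 then show ?thesis using x by (intro exI[of _ k] exI[of _ "Suc y"] exI[of _ z]) simp
  next
    case 3 then show ?thesis using x by (intro exI[of _ k] exI[of _ y] exI[of _ "Suc z"]) simp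
  qed
qed

lemma memd: "x \<in> gen_monoid {m, a*m+1, b*m+t} \<Longrightarrow> g (x mod m) \<le> x div m"
proof -
  assume "x \<in> gen_monoid {m, a*m+1, b*m+t}"
  then obtain k y z where x: "x = k*m + y*(a*m+1) + z*(b*m+t)" using gm_rep by blast
  define N where "N = y + z*t"
  have m0: "m > 0" using m3 by simp
  have x2: "x = (k + y*a + z*b)*m + N" unfolding x N_def by (simp add: algebra_simps)
  have "x mod m = N mod m" unfolding x2 by simp
  moreover have "x div m = k + y*a + z*b + N div m" unfolding x2 using m0 by simp
  moreover have "g (N mod m) \<le> g N" by (rule g_mono) simp
  moreover have "g N \<le> y*a + z*b" unfolding N_def by (rule g_le)
  ultimately show ?thesis by simp
qed

lemma memd2: "c*m + i \<in> gen_monoid {m, a*m+1, b*m+t} \<Longrightarrow> i < m \<Longrightarrow> g i \<le> c"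
  using memd[of "c*m+i"] by simp


lemma memI: "i < m \<Longrightarrow> (C * int m + int i \<in> int ` gen_monoid {m, a*m+1, b*m+t}) = (int (g i) \<le> C)"
proof
  assume i: "i < m" and h: "C * int m + int i \<in> int ` gen_monoid {m, a*m+1, b*m+t}"
  then obtain y where y: "C * int m + int i = int y" "y \<in> gen_monoid {m, a*m+1, b*m+t}" by auto
  have m0: "m > 0" using m3 by simp
  have "C \<ge> 0"
  proof (rule ccontr)
    assume "\<not> C \<ge> 0"
    then have "C \<le> -1" by simp
    then have "C * int m \<le> - int m" using mult_right_mono[of C "-1" "int m"] by simp
    then show False using y(1) i by linarith
  qed
  then obtain c where c: "C = int c" by (metis nonneg_eq_int)
  then have "y = c*m + i" using y(1) by (metis of_nat_add of_nat_mult of_nat_eq_iff)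
  then have "g i \<le> c" using memd2 y(2) i by simp
  then show "int (g i) \<le> C" using c by simp
next
  assume i: "i < m" and h: "int (g i) \<le> C"
  then obtain c where c: "C = int c" by (metis nonneg_eq_int of_nat_0_le_iff order_trans)
  then have "g i \<le> c" using h by simp
  then have "c*m + i \<in> gen_monoid {m, a*m+1, b*m+t}" by (rule memc)
  then show "C * int m + int i \<in> int ` gen_monoid {m, a*m+1, b*m+t}" using c by force
qed

lemma S_dec: "s \<in> gen_monoid {m, a*m+1, b*m+t} \<Longrightarrow> int s = int (s div m) * int m + int (s mod m) \<and> g (s mod m) \<le> s div m \<and> s mod m < m"
  using memd[of s] m3 by (simp flip: of_nat_mult of_nat_add)

abbreviation F :: int where "F \<equiv> (int (g (m-1)) - 1) * int m + int (m-1)"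

lemma F_PF: "F \<in> pseudo_frobenius (gen_monoid {m, a*m+1, b*m+t})"
  unfolding pseudo_frobenius_def
proof (intro CollectI conjI ballI impI)
  have m1: "m - 1 < m" using m3 by simp
  show "F \<notin> int ` gen_monoid {m, a*m+1, b*m+t}" using memI[OF m1] by simp
  fix s assume s: "s \<in> gen_monoid {m, a*m+1, b*m+t}" "s \<noteq> 0"
  define c where "c = s div m"
  define j where "j = s mod m"
  have d: "int s = int c * int m + int j" "g j \<le> c" "j < m" using S_dec[OF s(1)] c_def j_def by auto
  show "F + int s \<in> int ` gen_monoid {m, a*m+1, b*m+t}"
  proof (cases "j = 0")
    case True
    then have "c \<ge> 1" using d s(2) by (cases c) auto
    have eq: "F + int s = (int (g (m-1)) + int c - 1) * int m + int (m-1)" using d True by (simp add: algebra_simps)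
    have "(int (g (m-1)) + int c - 1) * int m + int (m-1) \<in> int ` gen_monoid {m, a*m+1, b*m+t}"
      using memI[OF m1] \<open>c \<ge> 1\<close> by simp
    then show ?thesis unfolding eq .
  next
    case False
    have j1: "j - 1 < m" using d by simp
    have "F + int s = (int (g (m-1)) + int c) * int m + int (j-1)" using d False m3
      by (simp add: algebra_simps of_nat_diff)
    moreover have "g (j-1) \<le> g j" by (rule g_mono) simp
    ultimately show ?thesis using memI[OF j1] d by simp
  qed
qed

lemma PF_form: "x \<in> pseudo_frobenius (gen_monoid {m, a*m+1, b*m+t}) \<Longrightarrow> \<exists>i<m. x = (int (g i) - 1) * int m + int i"
proof -
  assume x: "x \<in> pseudo_frobenius (gen_monoid {m, a*m+1, b*m+t})"
  have m0: "m > 0" using m3 by simp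
  have "m \<in> gen_monoid {m, a*m+1, b*m+t}"
    using gen_monoid.add[OF gen_monoid.zero, of m] by simp
  then have xm: "x + int m \<in> int ` gen_monoid {m, a*m+1, b*m+t}"
    and xn: "x \<notin> int ` gen_monoid {m, a*m+1, b*m+t}"
    using x m0 unfolding pseudo_frobenius_def by auto
  define C where "C = (x + int m) div int m"
  define i where "i = nat ((x + int m) mod int m)"
  have im: "i < m" unfolding i_def using m0 by (simp add: nat_less_iff)
  have nn: "(x + int m) mod int m \<ge> 0" using m0 by simp
  have e: "x + int m = C * int m + int i"
    using div_mult_mod_eq[of "x + int m" "int m"] nn unfolding C_def i_def by simp
  have "int (g i) \<le> C" using xm memI[OF im] e by simp
  moreover have "\<not> int (g i) \<le> C - 1"
  proof
    assume "int (g i) \<le> C - 1"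
    then have "(C-1) * int m + int i \<in> int ` gen_monoid {m, a*m+1, b*m+t}" using memI[OF im] by simp
    moreover have "(C-1) * int m + int i = x" using e by (simp add: algebra_simps)
    ultimately show False using xn by simp
  qed
  ultimately have "C = int (g i)" by simp
  then show ?thesis using e im by (intro exI[of _ i]) (simp add: algebra_simps)
qed

lemma PF_finite: "finite (pseudo_frobenius (gen_monoid {m, a*m+1, b*m+t}))"
proof -
  have "pseudo_frobenius (gen_monoid {m, a*m+1, b*m+t}) \<subseteq> (\<lambda>i. (int (g i) - 1) * int m + int i) ` {..<m}"
    using PF_form by blast
  then show ?thesis by (rule finite_subset) simp
qed

lemma form_inj: "i1 < m \<Longrightarrow> i2 < m \<Longrightarrow> (C1::int) * int m + int i1 = C2 * int m + int i2 \<Longrightarrow> i1 = i2"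
proof -
  assume h: "i1 < m" "i2 < m" "C1 * int m + int i1 = C2 * int m + int i2"
  have "(C1 * int m + int i1) mod int m = int i1" using h(1)
    by (simp add: add.commute[of "C1 * int m"] flip: of_nat_mod)
  moreover have "(C2 * int m + int i2) mod int m = int i2" using h(2)
    by (simp add: add.commute[of "C2 * int m"] flip: of_nat_mod)
  ultimately show ?thesis using h(3) by (metis of_nat_eq_iff)
qed


lemma g_form: "e < t \<Longrightarrow> g (d*t + e) = e*a + d*b"
  unfolding g_def using t2 by simp

lemma g_add: "t dvd m \<Longrightarrow> i \<le> m - 1 \<Longrightarrow> g i + g (m-1-i) = g (m-1)"
proof -
  assume td: "t dvd m" and i: "i \<le> m - 1"
  obtain K where K: "m = K*t" using td by (metis dvd_def mult.commute)
  have "K \<noteq> 0" using K m3 by (cases K) auto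
  then obtain K' where K': "K = Suc K'" by (cases K) auto
  obtain t' where t': "t = Suc t'" using t2 by (cases t) auto
  have m1: "m - 1 = K'*t + t'" using K K' t' by simp
  define q where "q = i div t"
  define r where "r = i mod t"
  have ir: "i = q*t + r" unfolding q_def r_def by simp
  have "r < t" unfolding r_def using t2 by simp
  then obtain e where e: "t' = r + e" using t' by (metis less_Suc_eq_le le_Suc_ex)
  have "q*t < (Suc K')*t" using ir i m1 t' by simp
  then have "q \<le> K'" by (simp only: mult_less_cancel2) simp
  then obtain d where d: "K' = q + d" using le_Suc_ex by blast
  have "m - 1 - i = d*t + e" using m1 ir d e by (simp add: algebra_simps)
  moreover have "e < t" "r < t" "t' < t" using e t' \<open>r < t\<close> by auto
  ultimately have h1: "g (m-1-i) = e*a + d*b" using g_form by simp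
  have h2: "g i = r*a + q*b" using ir g_form \<open>r < t\<close> by simp
  have "m - 1 = (q+d)*t + t'" using m1 d by simp
  then have h3: "g (m-1) = t'*a + (q+d)*b" using g_form \<open>t' < t\<close> by simp
  show ?thesis using h1 h2 h3 e by (simp add: algebra_simps)
qed

lemma g_key: "\<not> t dvd m \<Longrightarrow> i0 = ((m-1) div t)*t - 1 \<Longrightarrow> 1 \<le> j \<Longrightarrow> i0 + j < m
   \<Longrightarrow> g (i0+j) + 1 \<le> g i0 + g j"
proof -
  assume nd: "\<not> t dvd m" and i0: "i0 = ((m-1) div t)*t - 1" and j: "1 \<le> j" "i0 + j < m"
  define Q where "Q = (m-1) div t"
  define R where "R = (m-1) mod t"
  have mQ: "m - 1 = Q*t + R" unfolding Q_def R_def by simp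
  have "R < t" unfolding R_def using t2 by simp
  have "R \<noteq> t - 1"
  proof
    assume "R = t - 1"
    then have "m = (Q+1)*t" using mQ t2 m3 by simp
    then show False using nd by simp
  qed
  have "Q \<noteq> 0"
  proof
    assume "Q = 0"
    then show False using mQ \<open>R < t\<close> tm by simp
  qed
  then obtain Q' where Q': "Q = Suc Q'" by (cases Q) auto
  obtain t' where t': "t = Suc t'" using t2 by (cases t) auto
  obtain j' where j': "j = Suc j'" using j by (cases j) auto
  have i0': "i0 = Q'*t + t'" using i0 Q' t' unfolding Q_def[symmetric] by simp
  have "j' < t'" using j(2) i0' mQ Q' t' \<open>R < t\<close> \<open>R \<noteq> t - 1\<close> j' by simp
  have g1: "g i0 = t'*a + Q'*b" unfolding i0' by (rule g_form) (simp add: t')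
  have g2: "g j = j*a"
    using g_form[of j 0] \<open>j' < t'\<close> j' t' by simp
  have "i0 + j = (Suc Q')*t + j'" using i0' j' t' by simp
  moreover have "g ((Suc Q')*t + j') = j'*a + (Suc Q')*b"
    by (rule g_form) (use \<open>j' < t'\<close> t' in simp)
  ultimately have g3: "g (i0 + j) = j'*a + (Suc Q')*b" by simp
  show ?thesis using g1 g2 g3 b_lt j' t' by (simp add: algebra_simps)
qed


lemma G_PF:
  assumes nd: "\<not> t dvd m" and i0: "i0 = ((m-1) div t)*t - 1"
  shows "(int (g i0) - 1) * int m + int i0 \<in> pseudo_frobenius (gen_monoid {m, a*m+1, b*m+t})"
    and "i0 < m - 1"
proof -
  have f1: "((m-1) div t)*t \<le> m - 1" by simp
  have "((m-1) div t) \<ge> 1" using tm t2 by (simp add: Suc_le_eq div_greater_zero_iff)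
  then have f2: "((m-1) div t)*t \<ge> 1" using t2 by simp
  show i0m: "i0 < m - 1" using i0 f1 f2 by linarith
  then have im: "i0 < m" by simp
  show "(int (g i0) - 1) * int m + int i0 \<in> pseudo_frobenius (gen_monoid {m, a*m+1, b*m+t})"
    unfolding pseudo_frobenius_def
  proof (intro CollectI conjI ballI impI)
    show "(int (g i0) - 1) * int m + int i0 \<notin> int ` gen_monoid {m, a*m+1, b*m+t}"
      using memI[OF im] by simp
    fix s assume s: "s \<in> gen_monoid {m, a*m+1, b*m+t}" "s \<noteq> 0"
    define c where "c = s div m"
    define j where "j = s mod m"
    have d: "int s = int c * int m + int j" "g j \<le> c" "j < m" using S_dec[OF s(1)] c_def j_def by auto
    consider "j = 0" | "j \<noteq> 0" "i0 + j \<ge> m" | "j \<noteq> 0" "i0 + j < m" by linarith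
    then show "(int (g i0) - 1) * int m + int i0 + int s \<in> int ` gen_monoid {m, a*m+1, b*m+t}"
    proof cases
      case 1
      then have "c \<ge> 1" using d s(2) by (cases c) auto
      have eq: "(int (g i0) - 1) * int m + int i0 + int s = (int (g i0) + int c - 1) * int m + int i0"
        using d 1 by (simp add: algebra_simps)
      have "(int (g i0) + int c - 1) * int m + int i0 \<in> int ` gen_monoid {m, a*m+1, b*m+t}"
        using memI[OF im] \<open>c \<ge> 1\<close> by simp
      then show ?thesis unfolding eq .
    next
      case 2
      have k: "i0 + j - m < m" using im d by simp
      have eq: "(int (g i0) - 1) * int m + int i0 + int s = (int (g i0) + int c) * int m + int (i0 + j - m)"
        using d 2 by (simp add: algebra_simps of_nat_diff)
      have "g (i0 + j - m) \<le> g j" by (rule g_mono) (use im in simp)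
      then have "(int (g i0) + int c) * int m + int (i0 + j - m) \<in> int ` gen_monoid {m, a*m+1, b*m+t}"
        using memI[OF k] d by simp
      then show ?thesis unfolding eq .
    next
      case 3
      have eq: "(int (g i0) - 1) * int m + int i0 + int s = (int (g i0) + int c - 1) * int m + int (i0 + j)"
        using d 3 by (simp add: algebra_simps)
      have "g (i0+j) + 1 \<le> g i0 + g j" using g_key[OF nd i0] 3 by simp
      then have "(int (g i0) + int c - 1) * int m + int (i0 + j) \<in> int ` gen_monoid {m, a*m+1, b*m+t}"
        using memI[OF 3(2)] d by simp
      then show ?thesis unfolding eq .
    qed
  qed
qed

lemma PF_unique:
  assumes td: "t dvd m" and x: "x \<in> pseudo_frobenius (gen_monoid {m, a*m+1, b*m+t})"
  shows "x = F"
proof -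
  obtain i where i: "i < m" "x = (int (g i) - 1) * int m + int i" using PF_form[OF x] by blast
  show ?thesis
  proof (cases "i = m - 1")
    case True then show ?thesis using i by simp
  next
    case False
    then have i1: "i < m - 1" using i by simp
    define s where "s = g (m-1-i) * m + (m-1-i)"
    have sS: "s \<in> gen_monoid {m, a*m+1, b*m+t}" unfolding s_def by (rule memc) simp
    have "s \<noteq> 0" unfolding s_def using i1 by simp
    then have "x + int s \<in> int ` gen_monoid {m, a*m+1, b*m+t}"
      using x sS unfolding pseudo_frobenius_def by blast
    moreover have "x + int s = F"
    proof -
      have "g i + g (m-1-i) = g (m-1)" using g_add[OF td] i1 by simp
      then have e1: "int (g (m-1)) = int (g i) + int (g (m-1-i))" by simp
      have e2: "int (m-1-i) = int m - 1 - int i" using i1 by simp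
      have e3: "int (m-1) = int m - 1" using i1 by simp
      have "int s = int (g (m-1-i)) * int m + int (m-1-i)" unfolding s_def by simp
      then show ?thesis unfolding e1 e2 e3 i(2) by (simp add: algebra_simps)
    qed
    moreover have "F \<notin> int ` gen_monoid {m, a*m+1, b*m+t}"
      using F_PF unfolding pseudo_frobenius_def by blast
    ultimately show ?thesis by simp
  qed
qed

end

theorem proposition3p21:
  fixes m a b t :: nat
  assumes "m \<ge> 3" and "a \<ge> 1" and "2 \<le> t" and "t \<le> m - 1"
    and "(t - 1) * (a * m + 1) < b * m + t" and "b * m + t < t * (a * m + 1)"
  shows "semigroup_type (gen_monoid {m, a * m + 1, b * m + t}) = 1 \<longleftrightarrow> t dvd m"
proof -
  interpret mans3 m a b t using assms by unfold_locales
  let ?P = "pseudo_frobenius (gen_monoid {m, a * m + 1, b * m + t})"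
  show ?thesis
  proof
    assume td: "t dvd m"
    have "?P = {F}" using PF_unique[OF td] F_PF by blast
    then show "semigroup_type (gen_monoid {m, a * m + 1, b * m + t}) = 1"
      unfolding semigroup_type_def by simp
  next
    assume c1: "semigroup_type (gen_monoid {m, a * m + 1, b * m + t}) = 1"
    show "t dvd m"
    proof (rule ccontr)
      assume nd: "\<not> t dvd m"
      define i0 where "i0 = ((m-1) div t)*t - 1"
      note G = G_PF[OF nd i0_def]
      have ne: "(int (g i0) - 1) * int m + int i0 \<noteq> F"
      proof
        assume "(int (g i0) - 1) * int m + int i0 = F"
        then have "i0 = m - 1" using form_inj[of i0 "m-1"] G(2) by simp
        then show False using G(2) by simp
      qed
      have "{F, (int (g i0) - 1) * int m + int i0} \<subseteq> ?P" using F_PF G(1) by blast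
      then have "card {F, (int (g i0) - 1) * int m + int i0} \<le> card ?P"
        using PF_finite by (rule card_mono[rotated])
      then have "card ?P \<ge> 2" using ne by simp
      then show False using c1 unfolding semigroup_type_def by simp
    qed
  qed
qed

end
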